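(* There exist a decreasing gap asymptotically dense set $\Lambda\subset[0,+\infty)$ and a function $f\in C_0^+(\mathbb{R})$ such that $[0,1]\subset D(f,\Lambda)$ and $[4,5]\subset C(f,\Lambda)$.
   Context: For a discrete set $\Lambda\subset[0,\infty)$ and measurable $f:\mathbb{R}\to[0,+\infty)$, put $s(x)=\sum_{\lambda\in\Lambda}f(x+\lambda)$, $C(f,\Lambda)=\{x: s(x)<\infty\}$ and $D(f,\Lambda)=\{x: s(x)=\infty\}$. An unbounded infinite discrete set $\Lambda=\{\lambda_1<\lambda_2<\cdots\}$ is a decreasing gap asymptotically dense set if the gaps $d_n=\lambda_n-\lambda_{n-1}$ tend to $0$ monotone decreasingly. $C_0^+(\mathbb{R})$ denotes the set of continuous functions $\mathbb{R}\to[0,+\infty)$ tending to $0$ at $+\infty$. *)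

theory Defs
  imports "HOL-Analysis.Analysis"
begin

definition shift_sum :: "(real \<Rightarrow> real) \<Rightarrow> real set \<Rightarrow> real \<Rightarrow> ennreal" where
  "shift_sum f \<Lambda> x = (\<Sum>\<^sub>\<infinity>l\<in>\<Lambda>. ennreal (f (x + l)))"

definition conv_set :: "(real \<Rightarrow> real) \<Rightarrow> real set \<Rightarrow> real set" where
  "conv_set f \<Lambda> = {x. shift_sum f \<Lambda> x < \<infinity>}"

definition div_set :: "(real \<Rightarrow> real) \<Rightarrow> real set \<Rightarrow> real set" where
  "div_set f \<Lambda> = {x. shift_sum f \<Lambda> x = \<infinity>}"

definition dec_gap_asymp_dense :: "real set \<Rightarrow> bool" where
  "dec_gap_asymp_dense \<Lambda> \<longleftrightarrow> \<Lambda> \<subseteq> {0..} \<and> \<not> bdd_above \<Lambda> \<and>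
     (\<exists>lam :: nat \<Rightarrow> real. strict_mono lam \<and> range lam = \<Lambda> \<and>
        (\<forall>n. lam (Suc (Suc n)) - lam (Suc n) \<le> lam (Suc n) - lam n) \<and>
        (\<lambda>n. lam (Suc n) - lam n) \<longlonglongrightarrow> 0)"

definition C0_plus :: "(real \<Rightarrow> real) set" where
  "C0_plus = {f. continuous_on UNIV f \<and> (\<forall>x. 0 \<le> f x) \<and> (f \<longlongrightarrow> 0) at_top}"

end

theory Submission
  imports Defs
begin

fun Aseq :: "nat \<Rightarrow> nat" where
  "Aseq 0 = 0"
| "Aseq (Suc k) = Aseq k + 4 * ((k+1) * 2 ^ Aseq k)"

definition mseq :: "nat \<Rightarrow> nat" where "mseq k = (k+1) * 2 ^ Aseq k"

declare Aseq.simps(2)[simp del]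

lemma Aseq_Suc: "Aseq (Suc k) = Aseq k + 4 * mseq k"
  by (simp add: mseq_def Aseq.simps(2))

lemma mseq_ge: "mseq k \<ge> k + 1"
proof -
  have "(k+1) * 1 \<le> (k+1) * 2 ^ Aseq k" by (intro mult_le_mono2) simp
  then show ?thesis unfolding mseq_def by simp
qed

lemma mseq_pos: "mseq k \<ge> 1"
  using mseq_ge[of k] by simp

lemma Aseq_smono: "strict_mono Aseq"
  unfolding strict_mono_Suc_iff using mseq_pos by (simp add: Aseq_Suc Suc_le_eq)

lemma Aseq_mono: "mono Aseq"
  using Aseq_smono strict_mono_mono by blast

lemma Aseq_ge: "Aseq k \<ge> k"
  using Aseq_smono strict_mono_imp_increasing by blast

lemma mseq_mono: "mono mseq"
proof (rule monoI)
  fix a b :: nat assume "a \<le> b"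
  then have "Aseq a \<le> Aseq b" using Aseq_mono monoD by blast
  then have "(2::nat) ^ Aseq a \<le> 2 ^ Aseq b" by simp
  then show "mseq a \<le> mseq b" unfolding mseq_def using \<open>a \<le> b\<close>
    by (intro mult_mono) auto
qed

definition blk :: "nat \<Rightarrow> nat" where "blk n = (LEAST k. n < Aseq (Suc k))"

lemma blk_props: "Aseq (blk n) \<le> n \<and> n < Aseq (Suc (blk n))"
proof -
  have ex: "n < Aseq (Suc n)" using Aseq_ge[of "Suc n"] by simp
  have 1: "n < Aseq (Suc (blk n))" unfolding blk_def by (rule LeastI[of _ n], fact ex)
  have 2: "Aseq (blk n) \<le> n"
  proof (cases "blk n")
    case 0 then show ?thesis by simp
  next
    case (Suc j)
    have "\<not> n < Aseq (Suc j)"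
    proof
      assume "n < Aseq (Suc j)"
      then have "blk n \<le> j" unfolding blk_def by (rule Least_le)
      with Suc show False by simp
    qed
    with Suc show ?thesis by simp
  qed
  from 1 2 show ?thesis by simp
qed

lemma blk_unique: assumes "Aseq k \<le> n" "n < Aseq (Suc k)" shows "blk n = k"
proof -
  have a: "Aseq (blk n) \<le> n" "n < Aseq (Suc (blk n))" using blk_props by auto
  show ?thesis
  proof (rule ccontr)
    assume "blk n \<noteq> k"
    then consider "blk n < k" | "k < blk n" by linarith
    then show False
    proof cases
      case 1
      then have "Suc (blk n) \<le> k" by simp
      then have "Aseq (Suc (blk n)) \<le> Aseq k" using Aseq_mono monoD by blast
      with a assms show False by simp
    next
      case 2
      then have "Suc k \<le> blk n" by simp
      then have "Aseq (Suc k) \<le> Aseq (blk n)" using Aseq_mono monoD by blast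
      with a assms show False by simp
    qed
  qed
qed

lemma blk_mono: "mono blk"
proof (rule monoI, rule ccontr)
  fix a b :: nat assume ab: "a \<le> b" and "\<not> blk a \<le> blk b"
  then have "Suc (blk b) \<le> blk a" by simp
  then have "Aseq (Suc (blk b)) \<le> Aseq (blk a)" using Aseq_mono monoD by blast
  with blk_props[of a] blk_props[of b] ab show False by simp
qed

lemma blk_ge: assumes "Aseq k \<le> n" shows "k \<le> blk n"
proof (rule ccontr)
  assume "\<not> k \<le> blk n"
  then have "Suc (blk n) \<le> k" by simp
  then have "Aseq (Suc (blk n)) \<le> Aseq k" using Aseq_mono monoD by blast
  with blk_props[of n] assms show False by simp
qed

definition lamseq :: "nat \<Rightarrow> real" where
  "lamseq n = 4 * real (blk n) + real (n - Aseq (blk n)) / real (mseq (blk n))"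

lemma lam_block: assumes "t < 4 * mseq k"
  shows "lamseq (Aseq k + t) = 4 * real k + real t / real (mseq k)"
proof -
  have "blk (Aseq k + t) = k" using assms by (intro blk_unique) (auto simp: Aseq_Suc)
  then show ?thesis unfolding lamseq_def by simp
qed

lemma lam_bounds: "4 * real (blk n) \<le> lamseq n \<and> lamseq n < 4 * real (blk n) + 4"
proof -
  let ?k = "blk n"
  have "n - Aseq ?k < 4 * mseq ?k" using blk_props[of n] by (simp add: Aseq_Suc less_diff_conv2 add.commute)
  then have "real (n - Aseq ?k) < 4 * real (mseq ?k)" by linarith
  then have "real (n - Aseq ?k) / real (mseq ?k) < 4"
    using mseq_pos[of ?k] by (simp add: divide_less_eq)
  then show ?thesis unfolding lamseq_def by simp
qed

lemma lam_gap: "lamseq (Suc n) - lamseq n = 1 / real (mseq (blk n))"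
proof -
  let ?k = "blk n"
  obtain t where t: "n = Aseq ?k + t" "t < 4 * mseq ?k"
    using blk_props[of n] by (metis Aseq_Suc add_less_cancel_left le_Suc_ex)
  have mp: "real (mseq ?k) > 0" using mseq_pos[of ?k] by simp
  show ?thesis
  proof (cases "Suc t < 4 * mseq ?k")
    case True
    have "lamseq (Suc n) = 4 * real ?k + real (Suc t) / real (mseq ?k)"
      using lam_block[OF True] t by simp
    moreover have "lamseq n = 4 * real ?k + real t / real (mseq ?k)"
      using lam_block[OF t(2)] t by simp
    ultimately show ?thesis using mp by (simp add: field_simps)
  next
    case False
    then have st: "Suc t = 4 * mseq ?k" using t by simp
    have "Suc n = Aseq (Suc ?k) + 0" using t st by (simp add: Aseq_Suc)
    then have "lamseq (Suc n) = 4 * real (Suc ?k)"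
      using lam_block[of 0 "Suc ?k"] mseq_pos[of "Suc ?k"] by simp
    moreover have "lamseq n = 4 * real ?k + real t / real (mseq ?k)"
      using lam_block[OF t(2)] t by simp
    moreover have "real t = 4 * real (mseq ?k) - 1" using st by linarith
    ultimately show ?thesis using mp by (simp add: field_simps)
  qed
qed

definition cseq :: "nat \<Rightarrow> real" where "cseq k = (1/2) ^ Aseq k"

definition fex :: "real \<Rightarrow> real" where
  "fex y = cseq (nat \<lfloor>y/4\<rfloor>) * (1 - cos (pi * y / 2))"

lemma cseq_anti: assumes "k \<le> k'" shows "cseq k' \<le> cseq k"
proof -
  have "Aseq k \<le> Aseq k'" using assms Aseq_mono monoD by blast
  then show ?thesis unfolding cseq_def by (intro power_decreasing) auto
qed

lemma cseq_nonneg: "0 \<le> cseq k" unfolding cseq_def by simp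
lemma cseq_le1: "cseq k \<le> 1" unfolding cseq_def by (simp add: power_le_one)

lemma fex_nonneg: "0 \<le> fex y"
  unfolding fex_def using cseq_nonneg cos_le_one by (intro mult_nonneg_nonneg) auto

lemma fex_le2: "fex y \<le> 2 * cseq (nat \<lfloor>y/4\<rfloor>)"
proof -
  have "1 - cos (pi * y / 2) \<le> 2" using cos_ge_minus_one[of "pi*y/2"] by linarith
  then show ?thesis unfolding fex_def using cseq_nonneg[of "nat \<lfloor>y/4\<rfloor>"]
    by (metis mult.commute mult_left_mono)
qed

lemma fex_le_cos: "fex y \<le> 1 - cos (pi * y / 2)"
proof -
  have "0 \<le> 1 - cos (pi * y / 2)" using cos_le_one by simp
  then show ?thesis unfolding fex_def using cseq_le1[of "nat \<lfloor>y/4\<rfloor>"]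
    by (metis mult_left_le_one_le cseq_nonneg mult.commute)
qed

lemma cos_shift: "cos (a + 2 * real k * pi) = cos a"
  by (simp add: cos_add)

lemma fex_cont: "isCont fex y"
proof (cases "y/4 \<in> \<int>")
  case True
  then obtain j where j: "y/4 = of_int j" by (auto elim: Ints_cases)
  have "pi * y / 2 = (2*pi) * of_int j" using j by (simp add: field_simps)
  then have cy: "cos (pi * y / 2) = 1" by (metis cos_int_2pin)
  have fy: "fex y = 0" unfolding fex_def cy by simp
  have g: "((\<lambda>z. 1 - cos (pi * z / 2)) \<longlongrightarrow> 0) (at y)"
  proof -
    have "isCont (\<lambda>z. 1 - cos (pi * z / 2)) y" by (auto intro!: continuous_intros)
    then show ?thesis using cy by (simp add: isCont_def)
  qed
  have "(fex \<longlongrightarrow> 0) (at y)"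
    by (rule tendsto_sandwich[OF _ _ tendsto_const g]) (auto simp: fex_nonneg fex_le_cos)
  then show ?thesis using fy by (simp add: isCont_def)
next
  case False
  let ?j = "\<lfloor>y/4\<rfloor>"
  have lo: "4 * of_int ?j < y"
  proof -
    have "of_int ?j \<le> y/4" using of_int_floor_le[of "y/4"] by simp
    moreover have "of_int ?j \<noteq> y/4" using False by (metis Ints_of_int)
    ultimately show ?thesis by linarith
  qed
  have hi: "y < 4 * of_int ?j + 4" using floor_correct[of "y/4"] by linarith
  have ev: "eventually (\<lambda>z. fex z = cseq (nat ?j) * (1 - cos (pi * z / 2))) (nhds y)"
    unfolding eventually_nhds
  proof (intro exI[of _ "{4 * of_int ?j <..< 4 * of_int ?j + 4}"] conjI ballI)
    fix z assume "z \<in> {4 * of_int ?j <..< 4 * of_int ?j + 4::real}"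
    then have "\<lfloor>z/4\<rfloor> = ?j" by (subst floor_eq_iff) auto
    then show "fex z = cseq (nat ?j) * (1 - cos (pi * z / 2))" unfolding fex_def by simp
  qed (use lo hi in auto)
  have "isCont (\<lambda>z. cseq (nat ?j) * (1 - cos (pi * z / 2))) y" by (auto intro!: continuous_intros)
  then show ?thesis using isCont_cong[OF ev] by simp
qed

lemma fex_C0: "fex \<in> C0_plus"
proof -
  have c: "continuous_on UNIV fex" using fex_cont by (simp add: continuous_at_imp_continuous_on)
  have t: "(fex \<longlongrightarrow> 0) at_top"
    unfolding tendsto_iff eventually_at_top_linorder
  proof (intro allI impI)
    fix e :: real assume e: "0 < e"
    obtain K where K: "(1/2::real) ^ K < e/2" using real_arch_pow_inv[of "e/2" "1/2::real"] e by auto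
    show "\<exists>N. \<forall>y\<ge>N. dist (fex y) 0 < e"
    proof (intro exI[of _ "4 * real K"] allI impI)
      fix y assume y: "4 * real K \<le> y"
      then have "of_int (int K) \<le> y / 4" by simp
      then have "int K \<le> \<lfloor>y/4\<rfloor>" by (simp add: le_floor_iff)
      then have "K \<le> nat \<lfloor>y/4\<rfloor>" by simp
      then have "cseq (nat \<lfloor>y/4\<rfloor>) \<le> cseq K" by (rule cseq_anti)
      also have "cseq K \<le> (1/2) ^ K" unfolding cseq_def using Aseq_ge[of K]
        by (intro power_decreasing) auto
      finally have "fex y < e" using fex_le2[of y] K by linarith
      then show "dist (fex y) 0 < e" using fex_nonneg[of y] by simp
    qed
  qed
  show ?thesis unfolding C0_plus_def using c t fex_nonneg by auto
qed

lemma lam_smono: "strict_mono lamseq"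
  unfolding strict_mono_Suc_iff
proof
  fix n
  have "0 < 1 / real (mseq (blk n))" using mseq_pos[of "blk n"] by simp
  then show "lamseq n < lamseq (Suc n)" using lam_gap[of n] by linarith
qed

lemma lam_nonneg: "0 \<le> lamseq n"
  using lam_bounds[of n] by linarith

lemma dga: "dec_gap_asymp_dense (range lamseq)"
  unfolding dec_gap_asymp_dense_def
proof (intro conjI exI[of _ lamseq])
  show "range lamseq \<subseteq> {0..}" using lam_nonneg by auto
  show "\<not> bdd_above (range lamseq)"
  proof
    assume "bdd_above (range lamseq)"
    then obtain B where B: "\<And>n. lamseq n \<le> B" by (auto simp: bdd_above_def)
    obtain k :: nat where k: "B < real k" using reals_Archimedean2 by blast
    have "lamseq (Aseq k + 0) = 4 * real k" using lam_block[of 0 k] mseq_pos[of k] by simp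
    with B[of "Aseq k"] k show False by simp
  qed
  show "strict_mono lamseq" by (rule lam_smono)
  show "range lamseq = range lamseq" ..
  show "\<forall>n. lamseq (Suc (Suc n)) - lamseq (Suc n) \<le> lamseq (Suc n) - lamseq n"
  proof
    fix n
    have "blk n \<le> blk (Suc n)" using blk_mono monoD by fastforce
    then have "mseq (blk n) \<le> mseq (blk (Suc n))" using mseq_mono monoD by blast
    then have "1 / real (mseq (blk (Suc n))) \<le> 1 / real (mseq (blk n))"
      using mseq_pos[of "blk n"] by (intro divide_left_mono) auto
    then show "lamseq (Suc (Suc n)) - lamseq (Suc n) \<le> lamseq (Suc n) - lamseq n"
      by (simp add: lam_gap)
  qed
  show "(\<lambda>n. lamseq (Suc n) - lamseq n) \<longlonglongrightarrow> 0"
    unfolding lam_gap lim_sequentially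
  proof (intro allI impI)
    fix r :: real assume r: "0 < r"
    obtain k :: nat where k: "1 / r < real k" using reals_Archimedean2 by blast
    show "\<exists>no. \<forall>n\<ge>no. dist (1 / real (mseq (blk n))) 0 < r"
    proof (intro exI[of _ "Aseq k"] allI impI)
      fix n assume "Aseq k \<le> n"
      then have "k \<le> blk n" by (rule blk_ge)
      then have "real k < real (mseq (blk n))" using mseq_ge[of "blk n"] by linarith
      then have "1 / r < real (mseq (blk n))" using k by linarith
      then have "1 < real (mseq (blk n)) * r" using r by (simp add: pos_divide_less_eq)
      then have "1 / real (mseq (blk n)) < r" using mseq_pos[of "blk n"]
        by (simp add: divide_less_eq mult.commute)
      then show "dist (1 / real (mseq (blk n))) 0 < r" by simp
    qed
  qed
qed

lemma shift_sum_eq: "shift_sum f (range lamseq) x = (\<Sum>\<^sub>\<infinity>n. ennreal (f (x + lamseq n)))"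
proof -
  have "inj lamseq" using lam_smono strict_mono_imp_inj_on by blast
  from infsum_reindex[OF this, of "\<lambda>l. ennreal (f (x + l))"]
  show ?thesis unfolding shift_sum_def by (simp add: o_def)
qed

lemma conv_bound: assumes "4 \<le> x" shows "fex (x + lamseq n) \<le> 2 * (1/2)^n"
proof -
  let ?k = "blk n"
  have "4 * real ?k + 4 \<le> x + lamseq n" using lam_bounds[of n] assms by linarith
  then have "of_int (int (Suc ?k)) \<le> (x + lamseq n) / 4" by simp
  then have "int (Suc ?k) \<le> \<lfloor>(x + lamseq n) / 4\<rfloor>" by (simp add: le_floor_iff)
  then have "Suc ?k \<le> nat \<lfloor>(x + lamseq n) / 4\<rfloor>" by simp
  then have "cseq (nat \<lfloor>(x + lamseq n) / 4\<rfloor>) \<le> cseq (Suc ?k)" by (rule cseq_anti)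
  also have "cseq (Suc ?k) \<le> (1/2)^n" unfolding cseq_def
    using blk_props[of n] by (intro power_decreasing) auto
  finally show ?thesis using fex_le2[of "x + lamseq n"] by linarith
qed

lemma conv_part: assumes "4 \<le> x" shows "x \<in> conv_set fex (range lamseq)"
proof -
  have sm: "summable (\<lambda>n. 2 * (1/2::real)^n)" by (intro summable_mult summable_geometric) simp
  have su: "(\<Sum>n. 2 * (1/2::real)^n) = 4"
    using suminf_mult[of "\<lambda>n. (1/2::real)^n" 2] suminf_geometric[of "1/2::real"] summable_geometric[of "1/2::real"]
    by simp
  have "(\<Sum>\<^sub>\<infinity>n. ennreal (fex (x + lamseq n))) \<le> ennreal 4"
    unfolding nonneg_infsum_complete[OF zero_le]
  proof (rule SUP_least)
    fix F assume "F \<in> {F. finite F \<and> F \<subseteq> (UNIV::nat set)}"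
    then have F: "finite F" by simp
    have "sum (\<lambda>n. ennreal (fex (x + lamseq n))) F \<le> sum (\<lambda>n. ennreal (2 * (1/2)^n)) F"
      using conv_bound[OF assms] by (intro sum_mono ennreal_leI)
    also have "\<dots> = ennreal (sum (\<lambda>n. 2 * (1/2)^n) F)" by (rule sum_ennreal) simp
    also have "sum (\<lambda>n. 2 * (1/2::real)^n) F \<le> 4"
      using sum_le_suminf[OF sm F] su by simp
    finally show "sum (\<lambda>n. ennreal (fex (x + lamseq n))) F \<le> ennreal 4"
      by (simp add: ennreal_leI order_trans)
  qed
  then have "shift_sum fex (range lamseq) x < top"
    unfolding shift_sum_eq using ennreal_less_top le_less_trans by blast
  then show ?thesis unfolding conv_set_def by (simp add: infinity_ennreal_def)
qed

lemma div_point: assumes x: "0 \<le> x" "x \<le> 1" and t: "t < mseq k"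
  shows "cseq k \<le> fex (x + lamseq (Aseq k + (mseq k + t)))"
proof -
  have mp: "0 < real (mseq k)" using mseq_pos[of k] by simp
  have "mseq k + t < 4 * mseq k" using t by simp
  then have l: "lamseq (Aseq k + (mseq k + t)) = 4 * real k + 1 + real t / real (mseq k)"
    using lam_block mp by (simp add: add_divide_distrib)
  have tt: "0 \<le> real t / real (mseq k)" "real t / real (mseq k) < 1" using t mp by auto
  define y where "y = x + lamseq (Aseq k + (mseq k + t))"
  have y1: "4 * real k + 1 \<le> y" and y2: "y \<le> 4 * real k + 3" using l tt x unfolding y_def by auto
  have "\<lfloor>y/4\<rfloor> = int k" using y1 y2 by (subst floor_eq_iff) auto
  then have fl: "nat \<lfloor>y/4\<rfloor> = k" by simp
  define \<phi> where "\<phi> = pi * (y - 4 * real k - 1) / 2"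
  have a: "0 \<le> y - 4 * real k - 1" "y - 4 * real k - 1 \<le> 2" using y1 y2 by auto
  have "pi * (y - 4 * real k - 1) \<le> pi * 2" using a(2) pi_gt_zero by (intro mult_left_mono) auto
  then have ph: "0 \<le> \<phi>" "\<phi> \<le> pi" using a(1) pi_gt_zero unfolding \<phi>_def by auto
  have "pi * y / 2 = (\<phi> + pi/2) + 2 * real k * pi" unfolding \<phi>_def by (simp add: field_simps)
  then have "cos (pi * y / 2) = cos (\<phi> + pi/2)" by (simp only: cos_shift)
  also have "\<dots> = - sin \<phi>" by (simp add: cos_add)
  finally have "cos (pi * y / 2) \<le> 0" using sin_ge_zero[OF ph] by simp
  then have "cseq k * 1 \<le> cseq k * (1 - cos (pi * y / 2))"
    using cseq_nonneg[of k] by (intro mult_left_mono) auto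
  then show ?thesis unfolding y_def[symmetric] fex_def fl by simp
qed

lemma div_part: assumes "0 \<le> x" "x \<le> 1" shows "x \<in> div_set fex (range lamseq)"
proof -
  let ?S = "(\<Sum>\<^sub>\<infinity>n. ennreal (fex (x + lamseq n)))"
  have big: "of_nat (Suc k) \<le> ?S" for k
  proof -
    let ?F = "(\<lambda>t. Aseq k + (mseq k + t)) ` {..<mseq k}"
    have inj: "inj_on (\<lambda>t. Aseq k + (mseq k + t)) {..<mseq k}" by (auto simp: inj_on_def)
    have "sum (\<lambda>n. ennreal (fex (x + lamseq n))) ?F \<le> ?S"
      unfolding nonneg_infsum_complete[OF zero_le] by (rule SUP_upper) auto
    moreover have "sum (\<lambda>n. ennreal (fex (x + lamseq n))) ?F
        = (\<Sum>t<mseq k. ennreal (fex (x + lamseq (Aseq k + (mseq k + t)))))"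
      by (rule sum.reindex[OF inj, unfolded o_def])
    moreover have "(\<Sum>t<mseq k. ennreal (cseq k)) \<le> (\<Sum>t<mseq k. ennreal (fex (x + lamseq (Aseq k + (mseq k + t)))))"
      using div_point[OF assms] by (intro sum_mono ennreal_leI) auto
    moreover have "(\<Sum>t<mseq k. ennreal (cseq k)) = ennreal (real (mseq k) * cseq k)"
      using cseq_nonneg[of k] by (simp add: ennreal_mult' ennreal_of_nat_eq_real_of_nat)
    moreover have "real (mseq k) * cseq k = real (Suc k)"
    proof -
      have "real (mseq k) * cseq k = real (k+1) * ((2::real) ^ Aseq k * (1/2) ^ Aseq k)"
        unfolding mseq_def cseq_def by (simp add: algebra_simps)
      also have "(2::real) ^ Aseq k * (1/2) ^ Aseq k = 1" by (simp add: power_mult_distrib[symmetric])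
      finally show ?thesis by simp
    qed
    ultimately show ?thesis by (metis ennreal_of_nat_eq_real_of_nat order_trans)
  qed
  have "top \<le> ?S"
    unfolding ennreal_SUP_of_nat_eq_top[symmetric]
  proof (rule SUP_least)
    fix k :: nat show "of_nat k \<le> ?S" 
    proof -
      have "(of_nat k :: ennreal) \<le> of_nat (Suc k)" by (simp only: of_nat_le_iff)
      then show ?thesis using big[of k] by (rule order_trans)
    qed
  qed
  then have "shift_sum fex (range lamseq) x = top" unfolding shift_sum_eq using top.extremum_unique by blast
  then show ?thesis unfolding div_set_def by (simp add: infinity_ennreal_def)
qed

theorem theorem3p3:
  shows "\<exists>\<Lambda> f. dec_gap_asymp_dense \<Lambda> \<and> f \<in> C0_plus \<and>
           {0..1} \<subseteq> div_set f \<Lambda> \<and> {4..5} \<subseteq> conv_set f \<Lambda>"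
proof (intro exI[of _ "range lamseq"] exI[of _ fex] conjI subsetI)
  show "dec_gap_asymp_dense (range lamseq)" by (rule dga)
  show "fex \<in> C0_plus" by (rule fex_C0)
  fix x :: real assume "x \<in> {0..1}" then show "x \<in> div_set fex (range lamseq)" using div_part by simp
next
  fix x :: real assume "x \<in> {4..5}" then show "x \<in> conv_set fex (range lamseq)" using conv_part by simp
qed

end
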